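(* Let $M$ be a connected matroid whose ground set is $D_1\cup D_2\cup\{e\}$, where $e\notin D_1\cup D_2$ and $D_1,D_2$ are skew circuits of $M$. Then either $M$ has a $2$-element cocircuit avoiding $e$, or $M\cong S((U_{k-2,k};e),(U_{l-2,l};e))$ for some integers $k\ge3$ and $l\ge 3$.
   Context: Two sets $X,Y$ in a matroid with rank function $r$ are skew if $r(X)+r(Y)=r(X\cup Y)$. $U_{r,n}$ is the uniform matroid of rank $r$ on $n$ elements. Series connection: if $M_1,M_2$ are matroids with $E(M_1)\cap E(M_2)=\{p\}$ and $p$ is neither a loop nor a coloop of either, then $S((M_1;p),(M_2;p))$ is the matroid on $E(M_1)\cup E(M_2)$ whose circuits are the circuits of $M_1$ avoiding $p$, the circuits of $M_2$ avoiding $p$, and all sets $C_1\cup C_2$ where $C_i$ is a circuit of $M_i$ containing $p$ for $i=1,2$. *)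

theory Defs
  imports Main
begin

type_synonym 'a matroid = "'a set \<times> ('a set \<Rightarrow> bool)"

definition ground :: "'a matroid \<Rightarrow> 'a set" where
  "ground M = fst M"

definition indep :: "'a matroid \<Rightarrow> 'a set \<Rightarrow> bool" where
  "indep M I \<longleftrightarrow> I \<subseteq> ground M \<and> snd M I"

definition is_matroid :: "'a matroid \<Rightarrow> bool" where
  "is_matroid M \<longleftrightarrow>
     finite (ground M) \<and>
     indep M {} \<and>
     (\<forall>I J. indep M J \<and> I \<subseteq> J \<longrightarrow> indep M I) \<and>
     (\<forall>I J. indep M I \<and> indep M J \<and> card I < card J \<longrightarrow>
        (\<exists>x \<in> J - I. indep M (insert x I)))"

definition rank :: "'a matroid \<Rightarrow> 'a set \<Rightarrow> nat" where
  "rank M X = Max (card ` {I. I \<subseteq> X \<and> indep M I})"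

definition skew :: "'a matroid \<Rightarrow> 'a set \<Rightarrow> 'a set \<Rightarrow> bool" where
  "skew M X Y \<longleftrightarrow> rank M X + rank M Y = rank M (X \<union> Y)"

definition circuit :: "'a matroid \<Rightarrow> 'a set \<Rightarrow> bool" where
  "circuit M C \<longleftrightarrow> C \<subseteq> ground M \<and> \<not> indep M C \<and>
     (\<forall>x \<in> C. indep M (C - {x}))"

definition basis :: "'a matroid \<Rightarrow> 'a set \<Rightarrow> bool" where
  "basis M B \<longleftrightarrow> indep M B \<and> (\<forall>x \<in> ground M - B. \<not> indep M (insert x B))"

definition dual :: "'a matroid \<Rightarrow> 'a matroid" where
  "dual M = (ground M, \<lambda>I. I \<subseteq> ground M \<and> (\<exists>B. basis M B \<and> I \<inter> B = {}))"

definition cocircuit :: "'a matroid \<Rightarrow> 'a set \<Rightarrow> bool" where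
  "cocircuit M C \<longleftrightarrow> circuit (dual M) C"

definition connected_matroid :: "'a matroid \<Rightarrow> bool" where
  "connected_matroid M \<longleftrightarrow>
     (\<forall>x \<in> ground M. \<forall>y \<in> ground M. x \<noteq> y \<longrightarrow>
        (\<exists>C. circuit M C \<and> x \<in> C \<and> y \<in> C))"

definition uniform :: "nat \<Rightarrow> 'a set \<Rightarrow> 'a matroid" where
  "uniform r E = (E, \<lambda>I. I \<subseteq> E \<and> card I \<le> r)"

definition series_circuits :: "'a matroid \<Rightarrow> 'a matroid \<Rightarrow> 'a \<Rightarrow> 'a set set" where
  "series_circuits M1 M2 p =
     {C. circuit M1 C \<and> p \<notin> C} \<union> {C. circuit M2 C \<and> p \<notin> C} \<union>
     {C1 \<union> C2 | C1 C2. circuit M1 C1 \<and> p \<in> C1 \<and> circuit M2 C2 \<and> p \<in> C2}"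

definition series :: "'a matroid \<Rightarrow> 'a matroid \<Rightarrow> 'a \<Rightarrow> 'a matroid" where
  "series M1 M2 p = (ground M1 \<union> ground M2,
     \<lambda>I. I \<subseteq> ground M1 \<union> ground M2 \<and> (\<forall>C \<in> series_circuits M1 M2 p. \<not> C \<subseteq> I))"

definition matroid_iso :: "('a \<Rightarrow> 'b) \<Rightarrow> 'a matroid \<Rightarrow> 'b matroid \<Rightarrow> bool" where
  "matroid_iso f M N \<longleftrightarrow> bij_betw f (ground M) (ground N) \<and>
     (\<forall>I \<subseteq> ground M. indep M I \<longleftrightarrow> indep N (f ` I))"

end

theory Submission
  imports Defs
begin


locale mat = fixes M :: "'a matroid" assumes ism: "is_matroid M"
begin

lemma fin_ground: "finite (ground M)" using ism unfolding is_matroid_def by blast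
lemma indep_empty: "indep M {}" using ism unfolding is_matroid_def by blast
lemma indep_sub: "indep M J \<Longrightarrow> I \<subseteq> J \<Longrightarrow> indep M I" using ism unfolding is_matroid_def by blast
lemma indep_aug: "indep M I \<Longrightarrow> indep M J \<Longrightarrow> card I < card J \<Longrightarrow> \<exists>x\<in>J - I. indep M (insert x I)"
  using ism unfolding is_matroid_def by blast
lemma indep_ground: "indep M I \<Longrightarrow> I \<subseteq> ground M" unfolding indep_def by blast
lemma indep_fin: "indep M I \<Longrightarrow> finite I" using indep_ground fin_ground finite_subset by blast
lemma indep_card: "indep M I \<Longrightarrow> card I \<le> card (ground M)"
  using indep_ground fin_ground card_mono by blast

lemma circ_dep: "circuit M C \<Longrightarrow> C \<subseteq> X \<Longrightarrow> \<not> indep M X"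
  unfolding circuit_def using indep_sub by blast
lemma circ_del: "circuit M C \<Longrightarrow> x \<in> C \<Longrightarrow> indep M (C - {x})"
  unfolding circuit_def by blast
lemma circ_ground: "circuit M C \<Longrightarrow> C \<subseteq> ground M"
  unfolding circuit_def by blast
lemma circ_fin: "circuit M C \<Longrightarrow> finite C"
  using circ_ground fin_ground finite_subset by blast
lemma circ_ne: "circuit M C \<Longrightarrow> C \<noteq> {}"
  using circ_dep indep_empty by blast

lemma max_ext:
  assumes "indep M J" "J \<subseteq> K"
  shows "\<exists>I. indep M I \<and> J \<subseteq> I \<and> I \<subseteq> K \<and> (\<forall>I'. indep M I' \<and> I' \<subseteq> K \<longrightarrow> card I' \<le> card I)"
proof -
  let ?P = "\<lambda>I. indep M I \<and> J \<subseteq> I \<and> I \<subseteq> K"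
  have "\<exists>x. ?P x \<and> (\<forall>y. ?P y \<longrightarrow> card y \<le> card x)"
  proof (rule ex_has_greatest_nat[where k=J and b="Suc (card (ground M))" and f=card and P="?P"])
    show "?P J" using assms by blast
    show "\<forall>y. ?P y \<longrightarrow> card y < Suc (card (ground M))"
      using indep_card le_imp_less_Suc by blast
  qed
  then obtain I where I: "?P I" "\<And>y. ?P y \<Longrightarrow> card y \<le> card I" by blast
  have "card I' \<le> card I" if "indep M I'" "I' \<subseteq> K" for I'
  proof (rule ccontr)
    assume "\<not> ?thesis"
    then have "card I < card I'" by simp
    then have "\<exists>x\<in>I' - I. indep M (insert x I)" using I(1) that(1) by (intro indep_aug) auto
    then obtain x where x: "x \<in> I' - I" "indep M (insert x I)" by blast
    have "x \<in> K" using x(1) that(2) by blast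
    then have "?P (insert x I)" using x(2) I(1) by blast
    then have "card (insert x I) \<le> card I" using I(2) by blast
    moreover have "card (insert x I) = Suc (card I)" using x indep_fin I(1) by simp
    ultimately show False by simp
  qed
  then show ?thesis using I by blast
qed

lemma max_basis:
  assumes "indep M I" "\<forall>I'. indep M I' \<and> I' \<subseteq> ground M \<longrightarrow> card I' \<le> card I"
  shows "basis M I"
  unfolding basis_def
proof (intro conjI ballI assms(1) notI)
  fix x assume x: "x \<in> ground M - I" "indep M (insert x I)"
  then have "card (insert x I) \<le> card I" using assms(2) indep_ground by blast
  moreover have "card (insert x I) = Suc (card I)" using x indep_fin assms(1) by simp
  ultimately show False by simp
qed

lemma basis_big: "basis M B \<Longrightarrow> indep M J \<Longrightarrow> card J \<le> card B"
proof (rule ccontr)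
  assume a: "basis M B" "indep M J" "\<not> card J \<le> card B"
  have "card B < card J" "indep M B" using a unfolding basis_def by auto
  then obtain x where x: "x \<in> J - B" "indep M (insert x B)" using indep_aug a(2) by blast
  then have "x \<in> ground M" using indep_ground a(2) by blast
  then show False using a(1) x unfolding basis_def by blast
qed

lemma rank_ge: "indep M I \<Longrightarrow> I \<subseteq> X \<Longrightarrow> card I \<le> rank M X"
proof -
  assume a: "indep M I" "I \<subseteq> X"
  have "finite {I. I \<subseteq> X \<and> indep M I}"
    by (rule finite_subset[of _ "Pow (ground M)"]) (use indep_ground fin_ground in auto)
  then show ?thesis unfolding rank_def using a by (intro Max_ge) auto
qed

lemma rank_ex: "\<exists>I. indep M I \<and> I \<subseteq> X \<and> card I = rank M X"
proof -
  have "finite {I. I \<subseteq> X \<and> indep M I}"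
    by (rule finite_subset[of _ "Pow (ground M)"]) (use indep_ground fin_ground in auto)
  moreover have "{I. I \<subseteq> X \<and> indep M I} \<noteq> {}" using indep_empty by auto
  ultimately have "rank M X \<in> card ` {I. I \<subseteq> X \<and> indep M I}" unfolding rank_def
    by (intro Max_in) auto
  then show ?thesis by auto
qed

lemma rank_circ: "circuit M C \<Longrightarrow> rank M C = card C - 1"
proof -
  assume c: "circuit M C"
  obtain I where I: "indep M I" "I \<subseteq> C" "card I = rank M C" using rank_ex by blast
  have "I \<noteq> C" using I c circ_dep by blast
  then have "card I < card C" using I c circ_fin psubset_card_mono by blast
  moreover obtain x where "x \<in> C" using circ_ne c by blast
  then have "card (C - {x}) \<le> rank M C" using rank_ge circ_del c by blast
  moreover have "card (C - {x}) = card C - 1" using \<open>x \<in> C\<close> c circ_fin by simp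
  ultimately show ?thesis using I by linarith
qed

end


locale twoc = mat + fixes D1 D2 :: "'a set" and e :: 'a
  assumes conn: "connected_matroid M" and gr: "ground M = D1 \<union> D2 \<union> {e}"
    and enot: "e \<notin> D1 \<union> D2" and c1: "circuit M D1" and c2: "circuit M D2"
    and sk: "skew M D1 D2"
begin

lemma swap: "twoc M D2 D1 e"
proof -
  have "skew M D2 D1" using sk unfolding skew_def by (simp add: Un_commute add.commute)
  moreover have "ground M = D2 \<union> D1 \<union> {e}" using gr by blast
  moreover have "e \<notin> D2 \<union> D1" using enot by blast
  ultimately show ?thesis using conn c1 c2 ism unfolding twoc_def twoc_axioms_def mat_def by blast
qed

lemma noloop: assumes "circuit M D" "e \<notin> D" shows "card D \<ge> 2"
proof (rule ccontr)
  assume "\<not> ?thesis"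
  moreover have "card D \<noteq> 0" using circ_ne circ_fin assms(1) by auto
  ultimately have "card D = 1" by linarith
  then obtain u where u: "D = {u}" using card_1_singletonE by blast
  have "u \<in> ground M" "e \<in> ground M" "u \<noteq> e" using u assms circ_ground gr by auto
  then obtain C where C: "circuit M C" "u \<in> C" "e \<in> C" using conn unfolding connected_matroid_def by blast
  have "indep M (C - {e})" using C circ_del by blast
  moreover have "D \<subseteq> C - {e}" using u C \<open>u \<noteq> e\<close> by auto
  ultimately show False using circ_dep assms(1) by blast
qed

lemma a2: "card D1 \<ge> 2" using noloop c1 enot by blast
lemma b2: "card D2 \<ge> 2" using noloop c2 enot by blast
lemma f1: "finite D1" using circ_fin c1 by blast
lemma f2: "finite D2" using circ_fin c2 by blast

lemma rk: "rank M (D1 \<union> D2) = card D1 - 1 + (card D2 - 1)"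
  using sk rank_circ[OF c1] rank_circ[OF c2] unfolding skew_def by simp

lemma ext_big:
  assumes "indep M J" "J \<subseteq> D1 \<union> D2"
  shows "\<exists>I. indep M I \<and> J \<subseteq> I \<and> I \<subseteq> D1 \<union> D2 \<and> card I \<ge> card D1 - 1 + (card D2 - 1)"
proof -
  obtain T where T: "indep M T" "T \<subseteq> D1 \<union> D2" "card T = rank M (D1 \<union> D2)"
    using rank_ex by blast
  obtain I where I: "indep M I" "J \<subseteq> I" "I \<subseteq> D1 \<union> D2" "\<forall>I'. indep M I' \<and> I' \<subseteq> D1 \<union> D2 \<longrightarrow> card I' \<le> card I"
    using max_ext[OF assms] by blast
  have "card T \<le> card I" using I(4) T(1,2) by blast
  then have "card I \<ge> card D1 - 1 + (card D2 - 1)" using T(3) rk by simp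
  then show ?thesis using I(1-3) by blast
qed

lemma D12ne: "D1 \<noteq> D2"
proof
  assume "D1 = D2"
  then have "card D1 - 1 + (card D1 - 1) = card D1 - 1" using sk rank_circ[OF c1] unfolding skew_def by simp
  then show False using a2 by linarith
qed

lemma circ_incomp: "circuit M C \<Longrightarrow> circuit M C' \<Longrightarrow> C \<subseteq> C' \<Longrightarrow> C = C'"
proof (rule ccontr)
  assume a: "circuit M C" "circuit M C'" "C \<subseteq> C'" "C \<noteq> C'"
  then obtain x where x: "x \<in> C'" "x \<notin> C" by blast
  then have "C \<subseteq> C' - {x}" using a by blast
  moreover have "indep M (C' - {x})" using circ_del[OF a(2) x(1)] .
  ultimately show False using circ_dep[OF a(1)] by blast
qed

lemma dep_circ_ins: "circuit M D \<Longrightarrow> D - {v} \<subseteq> I \<Longrightarrow> v \<in> I \<Longrightarrow> \<not> indep M I"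
proof -
  assume a: "circuit M D" "D - {v} \<subseteq> I" "v \<in> I"
  then have "D \<subseteq> I" by blast
  then show ?thesis using circ_dep[OF a(1)] by blast
qed

lemma notsub: "circuit M D \<Longrightarrow> indep M I \<Longrightarrow> \<exists>z\<in>D. z \<notin> I"
proof -
  assume a: "circuit M D" "indep M I"
  then have "\<not> D \<subseteq> I" using circ_dep by blast
  then show ?thesis by blast
qed

lemma disj: "D1 \<inter> D2 = {}"
proof -
  have "\<not> D2 \<subseteq> D1" using circ_incomp[OF c2 c1] D12ne by blast
  then obtain v where v: "v \<in> D2" "v \<notin> D1" by blast
  have "indep M (D2 - {v})" using circ_del[OF c2 v(1)] .
  then obtain I where I: "indep M I" "D2 - {v} \<subseteq> I" "I \<subseteq> D1 \<union> D2" "card I \<ge> card D1 - 1 + (card D2 - 1)"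
    using ext_big[of "D2 - {v}"] by blast
  have "v \<notin> I" using dep_circ_ins[OF c2 I(2)] I(1) by blast
  obtain z where z: "z \<in> D1" "z \<notin> I" using notsub[OF c1 I(1)] by blast
  have "I \<subseteq> (D1 \<union> D2) - {v, z}" using I(3) z(2) \<open>v \<notin> I\<close> by blast
  then have "card I \<le> card ((D1 \<union> D2) - {v, z})" using f1 f2 by (intro card_mono) auto
  also have "\<dots> = card (D1 \<union> D2) - 2"
  proof -
    have "v \<noteq> z" using v z by blast
    then have "card {v, z} = 2" by simp
    moreover have "{v, z} \<subseteq> D1 \<union> D2" using v z by blast
    ultimately show ?thesis using f1 f2 by (simp add: card_Diff_subset)
  qed
  finally have "card D1 - 1 + (card D2 - 1) \<le> card (D1 \<union> D2) - 2" using I(4) by linarith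
  moreover have "card (D1 \<union> D2) + card (D1 \<inter> D2) = card D1 + card D2" using card_Un_Int[OF f1 f2] by simp
  ultimately have "card (D1 \<inter> D2) = 0" using a2 b2 by linarith
  then show ?thesis using f1 by simp
qed

lemma cardP: "z \<in> D1 \<Longrightarrow> w \<in> D2 \<Longrightarrow> card ((D1 - {z}) \<union> (D2 - {w})) = card D1 - 1 + (card D2 - 1)"
proof -
  assume a: "z \<in> D1" "w \<in> D2"
  have "(D1 - {z}) \<inter> (D2 - {w}) = {}" using disj by blast
  then have "card ((D1 - {z}) \<union> (D2 - {w})) = card (D1 - {z}) + card (D2 - {w})"
    using f1 f2 by (intro card_Un_disjoint) auto
  then show ?thesis using a f1 f2 by simp
qed

lemma half: "z \<in> D1 \<Longrightarrow> \<exists>w\<in>D2. indep M ((D1 - {z}) \<union> (D2 - {w}))"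
proof -
  assume z: "z \<in> D1"
  have "indep M (D1 - {z})" using circ_del[OF c1 z] .
  then obtain I where I: "indep M I" "D1 - {z} \<subseteq> I" "I \<subseteq> D1 \<union> D2" "card I \<ge> card D1 - 1 + (card D2 - 1)"
    using ext_big[of "D1 - {z}"] by blast
  have "z \<notin> I" using dep_circ_ins[OF c1 I(2)] I(1) by blast
  obtain w where w: "w \<in> D2" "w \<notin> I" using notsub[OF c2 I(1)] by blast
  have sub: "I \<subseteq> (D1 - {z}) \<union> (D2 - {w})" using I(3) w(2) \<open>z \<notin> I\<close> by blast
  have fin: "finite ((D1 - {z}) \<union> (D2 - {w}))" using f1 f2 by simp
  have "card ((D1 - {z}) \<union> (D2 - {w})) \<le> card I" using cardP[OF z w(1)] I(4) by simp
  then have "card I = card ((D1 - {z}) \<union> (D2 - {w}))" using card_mono[OF fin sub] by linarith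
  then have "I = (D1 - {z}) \<union> (D2 - {w})" using card_subset_eq[OF fin sub] by blast
  then show ?thesis using I(1) w(1) by blast
qed


lemma L1: assumes z: "z \<in> D1" and w: "w \<in> D2" shows "indep M ((D1 - {z}) \<union> (D2 - {w}))"
proof -
  interpret sw: twoc M D2 D1 e by (rule swap)
  obtain w' where w': "w' \<in> D2" "indep M ((D1 - {z}) \<union> (D2 - {w'}))" using half[OF z] by blast
  obtain z'' where z'': "z'' \<in> D1" "indep M ((D2 - {w}) \<union> (D1 - {z''}))" using sw.half[OF w] by blast
  show ?thesis
  proof (cases "w = w'")
    case True then show ?thesis using w' by simp
  next
    case False
    let ?L = "(D1 - {z}) \<union> (D2 - {w, w'})"
    let ?P = "(D2 - {w}) \<union> (D1 - {z''})"
    have Li: "indep M ?L" by (rule indep_sub[OF w'(2)]) blast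
    have "(D1 - {z}) \<inter> (D2 - {w, w'}) = {}" using disj by blast
    then have "card ?L = card (D1 - {z}) + card (D2 - {w, w'})"
      using f1 f2 by (intro card_Un_disjoint) auto
    also have "card (D2 - {w, w'}) = card D2 - 2"
    proof -
      have "card {w, w'} = 2" using False by simp
      moreover have "{w, w'} \<subseteq> D2" using w w' by blast
      ultimately show ?thesis using f2 by (simp add: card_Diff_subset)
    qed
    finally have cL: "card ?L = card D1 - 1 + (card D2 - 2)" using z f1 by simp
    have cP: "card ?P = card D1 - 1 + (card D2 - 1)" using cardP[OF z''(1) w] by (simp add: Un_commute)
    have "card ?L < card ?P" using cL cP b2 by linarith
    then have "\<exists>u\<in>?P - ?L. indep M (insert u ?L)" using Li z''(2) by (intro indep_aug) auto
    then obtain u where u: "u \<in> ?P - ?L" "indep M (insert u ?L)" by blast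
    show ?thesis
    proof (cases "u \<in> D1")
      case True
      then have "u = z" using u(1) by blast
      then have "D1 - {z} \<subseteq> insert u ?L" "z \<in> insert u ?L" by auto
      then show ?thesis using dep_circ_ins[OF c1] u(2) by blast
    next
      case False
      then have "u = w'" using u(1) by blast
      moreover have "insert w' ?L = (D1 - {z}) \<union> (D2 - {w})" using w' \<open>w \<noteq> w'\<close> by blast
      ultimately show ?thesis using u(2) by simp
    qed
  qed
qed

lemma L1g: assumes "J \<subseteq> D1 \<union> D2" "\<not> D1 \<subseteq> J" "\<not> D2 \<subseteq> J" shows "indep M J"
proof -
  obtain z w where "z \<in> D1" "z \<notin> J" "w \<in> D2" "w \<notin> J" using assms by blast
  then show ?thesis using L1[of z w] assms(1) indep_sub by blast
qed

lemma no_full: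
  assumes J: "indep M J" "e \<in> J" and c: "card D1 - 1 \<le> card (J \<inter> D1)" "card D2 - 1 \<le> card (J \<inter> D2)"
  shows False
proof -
  have "D1 \<noteq> {}" using circ_ne c1 by blast
  then obtain d where d: "d \<in> D1" by blast
  have "d \<in> ground M" "e \<in> ground M" "d \<noteq> e" using d gr enot by auto
  then obtain C where C: "circuit M C" "e \<in> C" using conn unfolding connected_matroid_def by blast
  have Ci: "indep M (C - {e})" using circ_del[OF C] .
  obtain z' where z': "z' \<in> D1" "z' \<notin> C - {e}" using notsub[OF c1 Ci] by blast
  obtain w' where w': "w' \<in> D2" "w' \<notin> C - {e}" using notsub[OF c2 Ci] by blast
  let ?L = "(D1 - {z'}) \<union> (D2 - {w'})"
  have Li: "indep M ?L" using L1[OF z'(1) w'(1)] .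
  have cL: "card ?L = card D1 - 1 + (card D2 - 1)" using cardP[OF z'(1) w'(1)] .
  have fJ: "finite J" using indep_fin[OF J(1)] .
  have "insert e ((J \<inter> D1) \<union> (J \<inter> D2)) \<subseteq> J" using J(2) by blast
  then have "card (insert e ((J \<inter> D1) \<union> (J \<inter> D2))) \<le> card J" using fJ card_mono by blast
  moreover have "card (insert e ((J \<inter> D1) \<union> (J \<inter> D2))) = Suc (card (J \<inter> D1) + card (J \<inter> D2))"
  proof -
    have "card ((J \<inter> D1) \<union> (J \<inter> D2)) = card (J \<inter> D1) + card (J \<inter> D2)"
      using disj f1 f2 by (intro card_Un_disjoint) auto
    moreover have "e \<notin> (J \<inter> D1) \<union> (J \<inter> D2)" using enot by blast
    ultimately show ?thesis using f1 f2 by simp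
  qed
  ultimately have "card ?L < card J" using cL c a2 b2 by linarith
  then have "\<exists>u\<in>J - ?L. indep M (insert u ?L)" using Li J(1) by (intro indep_aug) auto
  then obtain u where u: "u \<in> J - ?L" "indep M (insert u ?L)" by blast
  have "u \<in> D1 \<union> D2 \<union> {e}" using u(1) indep_ground[OF J(1)] gr by blast
  moreover have "u \<noteq> e"
  proof
    assume "u = e"
    have "C \<subseteq> insert u ?L" using circ_ground[OF C(1)] gr z'(2) w'(2) \<open>u = e\<close> by blast
    then show False using circ_dep[OF C(1)] u(2) by blast
  qed
  moreover have "u \<notin> D1"
  proof
    assume "u \<in> D1"
    then have "u = z'" using u(1) by blast
    then show False using dep_circ_ins[OF c1, of z' "insert u ?L"] u(2) by blast
  qed
  moreover have "u \<notin> D2"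
  proof
    assume "u \<in> D2"
    then have "u = w'" using u(1) by blast
    then show False using dep_circ_ins[OF c2, of w' "insert u ?L"] u(2) by blast
  qed
  ultimately show False by blast
qed

lemma dual_indep: "indep (dual M) X \<longleftrightarrow> X \<subseteq> ground M \<and> (\<exists>B. basis M B \<and> X \<inter> B = {})"
  unfolding indep_def dual_def ground_def by auto

lemma basis_avoid: assumes v: "v \<in> D2" shows "\<exists>B. basis M B \<and> v \<notin> B"
proof -
  have "D1 \<noteq> {}" using circ_ne c1 by blast
  then obtain z where z: "z \<in> D1" by blast
  let ?P = "(D1 - {z}) \<union> (D2 - {v})"
  have "?P \<subseteq> ground M" using gr by auto
  from max_ext[OF L1[OF z v] this] obtain B where B: "indep M B" "?P \<subseteq> B" "B \<subseteq> ground M"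
     "\<forall>I'. indep M I' \<and> I' \<subseteq> ground M \<longrightarrow> card I' \<le> card B"
    by blast
  have "basis M B" by (rule max_basis[OF B(1) B(4)])
  moreover have "v \<notin> B"
  proof
    assume "v \<in> B"
    moreover have "D2 - {v} \<subseteq> B" using B(2) by blast
    ultimately have "\<not> indep M B" using dep_circ_ins[OF c2] by blast
    then show False using B(1) by blast
  qed
  ultimately show ?thesis by blast
qed

lemma no_basis_avoid:
  assumes I: "I \<subseteq> D1 \<union> D2" "indep M I" "\<not> indep M (insert e I)"
    and xy: "x \<in> D2" "y \<in> D2" "x \<notin> I" "y \<notin> I" "x \<noteq> y"
    and B: "basis M B" "x \<notin> B" "y \<notin> B"
  shows False
proof -
  let ?K = "D1 \<union> (D2 - {x, y})"
  have "I \<subseteq> ?K" using I(1) xy by blast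
  from max_ext[OF I(2) this] obtain I' where I': "indep M I'" "I \<subseteq> I'" "I' \<subseteq> ?K"
     "\<forall>I''. indep M I'' \<and> I'' \<subseteq> ?K \<longrightarrow> card I'' \<le> card I'"
    by blast
  have ne: "\<not> indep M (insert e I')"
  proof
    assume "indep M (insert e I')"
    moreover have "insert e I \<subseteq> insert e I'" using I'(2) by blast
    ultimately show False using I(3) indep_sub by blast
  qed
  obtain z where z: "z \<in> D1" "z \<notin> I'" using notsub[OF c1 I'(1)] by blast
  have fK: "finite ?K" using f1 f2 by blast
  have "I' \<subseteq> ?K - {z}" using I'(3) z by blast
  then have "card I' \<le> card (?K - {z})" using fK by (intro card_mono) auto
  also have "card (?K - {z}) = card ?K - 1" using z fK by simp
  also have "card ?K = card D1 + card (D2 - {x, y})" using disj f1 f2 by (intro card_Un_disjoint) auto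
  also have "card (D2 - {x, y}) = card D2 - 2"
  proof -
    have "card {x, y} = 2" using xy by simp
    moreover have "{x, y} \<subseteq> D2" using xy by blast
    ultimately show ?thesis using f2 by (simp add: card_Diff_subset)
  qed
  finally have cI': "card I' \<le> card D1 + (card D2 - 2) - 1" .
  have "card ((D1 - {z}) \<union> (D2 - {x})) \<le> card B" using basis_big[OF B(1) L1[OF z(1) xy(1)]] .
  then have "card D1 - 1 + (card D2 - 1) \<le> card B" using cardP[OF z(1) xy(1)] by simp
  then have "card I' < card B" using cI' a2 b2 by linarith
  then have "\<exists>u\<in>B - I'. indep M (insert u I')" using I'(1) B(1) unfolding basis_def by (intro indep_aug) auto
  then obtain u where u: "u \<in> B - I'" "indep M (insert u I')" by blast
  have "u \<in> ground M" using u(1) B(1) indep_ground unfolding basis_def by blast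
  moreover have "u \<noteq> e" using u(2) ne by blast
  moreover have "u \<noteq> x" "u \<noteq> y" using u(1) B(2,3) by auto
  ultimately have "u \<in> ?K" using gr by blast
  then have "card (insert u I') \<le> card I'" using I'(3,4) u(2) by blast
  moreover have "card (insert u I') = Suc (card I')" using u(1) indep_fin[OF I'(1)] by simp
  ultimately show False by simp
qed

lemma coc:
  assumes I: "I \<subseteq> D1 \<union> D2" "indep M I" "\<not> indep M (insert e I)"
    and xy: "x \<in> D2" "y \<in> D2" "x \<notin> I" "y \<notin> I" "x \<noteq> y"
  shows "cocircuit M {x, y}"
  unfolding cocircuit_def circuit_def
proof (intro conjI ballI)
  show "{x, y} \<subseteq> ground (dual M)" using xy gr unfolding dual_def ground_def by auto
  show "\<not> indep (dual M) {x, y}"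
    unfolding dual_indep using no_basis_avoid[OF I xy] by blast
  fix u assume u: "u \<in> {x, y}"
  show "indep (dual M) ({x, y} - {u})"
  proof (cases "u = x")
    case True
    obtain B where "basis M B" "y \<notin> B" using basis_avoid[OF xy(2)] by blast
    then show ?thesis unfolding dual_indep using True xy gr by auto
  next
    case False
    then have "u = y" using u by blast
    obtain B where "basis M B" "x \<notin> B" using basis_avoid[OF xy(1)] by blast
    then show ?thesis unfolding dual_indep using \<open>u = y\<close> xy gr by auto
  qed
qed

end


lemma circuit_uniform: "finite E \<Longrightarrow> circuit (uniform r E) C \<longleftrightarrow> C \<subseteq> E \<and> card C = Suc r"
proof -
  assume fE: "finite E"
  have gu: "ground (uniform r E) = E" unfolding uniform_def ground_def by simp
  have iu: "indep (uniform r E) X \<longleftrightarrow> X \<subseteq> E \<and> card X \<le> r" for X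
    unfolding indep_def uniform_def ground_def by auto
  show ?thesis
  proof
    assume c: "circuit (uniform r E) C"
    then have CE: "C \<subseteq> E" and nc: "\<not> card C \<le> r" and dl: "\<forall>x\<in>C. card (C - {x}) \<le> r"
      unfolding circuit_def gu iu by auto
    have fC: "finite C" using CE fE finite_subset by blast
    have "C \<noteq> {}" using nc by (metis card.empty le0)
    then obtain x where x: "x \<in> C" by blast
    have "card (C - {x}) = card C - 1" using x fC by simp
    then have "card C = Suc r" using dl x nc by fastforce
    then show "C \<subseteq> E \<and> card C = Suc r" using CE by blast
  next
    assume a: "C \<subseteq> E \<and> card C = Suc r"
    have fC: "finite C" using a fE finite_subset by blast
    have "card (C - {x}) \<le> r" if "x \<in> C" for x using that a fC by simp
    then show "circuit (uniform r E) C" unfolding circuit_def gu iu using a by auto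
  qed
qed

lemma indep_series: "indep (series M1 M2 p) X \<longleftrightarrow>
   X \<subseteq> ground M1 \<union> ground M2 \<and> \<not> (\<exists>C\<in>series_circuits M1 M2 p. C \<subseteq> X)"
  unfolding indep_def series_def ground_def by auto

lemma ground_series: "ground (series M1 M2 p) = ground M1 \<union> ground M2"
  unfolding series_def ground_def by simp

lemma ground_uniform: "ground (uniform r E) = E"
  unfolding uniform_def ground_def by simp

lemma series_ex: "(\<exists>C\<in>series_circuits M1 M2 p. C \<subseteq> X) \<longleftrightarrow>
   (\<exists>C. circuit M1 C \<and> p \<notin> C \<and> C \<subseteq> X) \<or> (\<exists>C. circuit M2 C \<and> p \<notin> C \<and> C \<subseteq> X) \<or>
   ((\<exists>C. circuit M1 C \<and> p \<in> C \<and> C \<subseteq> X) \<and> (\<exists>C. circuit M2 C \<and> p \<in> C \<and> C \<subseteq> X))"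
proof
  assume "\<exists>C\<in>series_circuits M1 M2 p. C \<subseteq> X"
  then obtain C where C: "C \<in> series_circuits M1 M2 p" "C \<subseteq> X" by blast
  then consider "circuit M1 C \<and> p \<notin> C" | "circuit M2 C \<and> p \<notin> C"
    | C1 C2 where "C = C1 \<union> C2" "circuit M1 C1 \<and> p \<in> C1 \<and> circuit M2 C2 \<and> p \<in> C2"
    unfolding series_circuits_def by blast
  then show "(\<exists>C. circuit M1 C \<and> p \<notin> C \<and> C \<subseteq> X) \<or> (\<exists>C. circuit M2 C \<and> p \<notin> C \<and> C \<subseteq> X) \<or>
   ((\<exists>C. circuit M1 C \<and> p \<in> C \<and> C \<subseteq> X) \<and> (\<exists>C. circuit M2 C \<and> p \<in> C \<and> C \<subseteq> X))"
  proof cases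
    case 1 then show ?thesis using C(2) by blast
  next
    case 2 then show ?thesis using C(2) by blast
  next
    case (3 C1 C2)
    then have "C1 \<subseteq> X" "C2 \<subseteq> X" using C(2) by auto
    then show ?thesis using 3 by blast
  qed
next
  assume "(\<exists>C. circuit M1 C \<and> p \<notin> C \<and> C \<subseteq> X) \<or> (\<exists>C. circuit M2 C \<and> p \<notin> C \<and> C \<subseteq> X) \<or>
   ((\<exists>C. circuit M1 C \<and> p \<in> C \<and> C \<subseteq> X) \<and> (\<exists>C. circuit M2 C \<and> p \<in> C \<and> C \<subseteq> X))"
  then consider C where "circuit M1 C \<and> p \<notin> C \<and> C \<subseteq> X" | C where "circuit M2 C \<and> p \<notin> C \<and> C \<subseteq> X"
     | C1 C2 where "circuit M1 C1 \<and> p \<in> C1 \<and> C1 \<subseteq> X" "circuit M2 C2 \<and> p \<in> C2 \<and> C2 \<subseteq> X"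
    by blast
  then show "\<exists>C\<in>series_circuits M1 M2 p. C \<subseteq> X"
  proof cases
    case (1 C) then show ?thesis unfolding series_circuits_def by blast
  next
    case (2 C) then show ?thesis unfolding series_circuits_def by blast
  next
    case (3 C1 C2)
    then have "C1 \<union> C2 \<in> series_circuits M1 M2 p" unfolding series_circuits_def by blast
    moreover have "C1 \<union> C2 \<subseteq> X" using 3 by blast
    ultimately show ?thesis by blast
  qed
qed

locale side =
  fixes f :: "'a \<Rightarrow> nat" and G D I :: "'a set" and e :: 'a
  assumes inj: "inj_on f G" and DG: "D \<subseteq> G" and eG: "e \<in> G" and eD: "e \<notin> D"
    and fD: "finite D" and cD: "card D \<ge> 2" and IG: "I \<subseteq> G"
begin

lemma fE: "finite (f ` insert e D)" using fD by simp

lemma cU: "circuit (uniform (Suc (card D) - 2) (f ` insert e D)) C \<longleftrightarrow> C \<subseteq> f ` insert e D \<and> card C = card D"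
proof -
  have "Suc (Suc (card D) - 2) = card D" using cD by linarith
  then show ?thesis using circuit_uniform[OF fE] by simp
qed

lemma pfD: "f e \<notin> f ` D"
proof
  assume "f e \<in> f ` D"
  then obtain d where "d \<in> D" "f e = f d" by blast
  then show False using inj eG DG eD inj_on_eq_iff by (metis subsetD)
qed

lemma side1: "(\<exists>C. circuit (uniform (Suc (card D) - 2) (f ` insert e D)) C \<and> f e \<notin> C \<and> C \<subseteq> f ` I) \<longleftrightarrow> D \<subseteq> I"
proof
  assume "\<exists>C. circuit (uniform (Suc (card D) - 2) (f ` insert e D)) C \<and> f e \<notin> C \<and> C \<subseteq> f ` I"
  then obtain C where C: "C \<subseteq> f ` insert e D" "card C = card D" "f e \<notin> C" "C \<subseteq> f ` I"
    unfolding cU by blast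
  have sub: "C \<subseteq> f ` D" using C(1,3) by auto
  have "card (f ` D) = card D" using card_image inj DG inj_on_subset by blast
  then have "C = f ` D" using card_subset_eq[OF _ sub] fD C(2) by simp
  then have "f ` D \<subseteq> f ` I" using C(4) by simp
  show "D \<subseteq> I"
  proof
    fix d assume "d \<in> D"
    then have "f d \<in> f ` I" using \<open>f ` D \<subseteq> f ` I\<close> by blast
    then obtain i where "i \<in> I" "f d = f i" by blast
    then show "d \<in> I" using inj DG IG \<open>d \<in> D\<close> inj_on_eq_iff by (metis subsetD)
  qed
next
  assume "D \<subseteq> I"
  have "card (f ` D) = card D" using card_image inj DG inj_on_subset by blast
  then have "circuit (uniform (Suc (card D) - 2) (f ` insert e D)) (f ` D)" unfolding cU by blast
  then show "\<exists>C. circuit (uniform (Suc (card D) - 2) (f ` insert e D)) C \<and> f e \<notin> C \<and> C \<subseteq> f ` I"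
    using pfD \<open>D \<subseteq> I\<close> by blast
qed

lemma side2: "(\<exists>C. circuit (uniform (Suc (card D) - 2) (f ` insert e D)) C \<and> f e \<in> C \<and> C \<subseteq> f ` I)
   \<longleftrightarrow> e \<in> I \<and> card D - 1 \<le> card (I \<inter> D)"
proof
  assume "\<exists>C. circuit (uniform (Suc (card D) - 2) (f ` insert e D)) C \<and> f e \<in> C \<and> C \<subseteq> f ` I"
  then obtain C where C: "C \<subseteq> f ` insert e D" "card C = card D" "f e \<in> C" "C \<subseteq> f ` I"
    unfolding cU by blast
  have "f e \<in> f ` I" using C(3,4) by blast
  then obtain i where "i \<in> I" "f e = f i" by blast
  then have eI: "e \<in> I" using inj eG IG inj_on_eq_iff by (metis subsetD)
  have sub: "C - {f e} \<subseteq> f ` (I \<inter> D)"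
  proof
    fix c assume c: "c \<in> C - {f e}"
    then have "c \<in> f ` D" using C(1) by auto
    then obtain d where d: "d \<in> D" "c = f d" by blast
    have "c \<in> f ` I" using c C(4) by blast
    then obtain j where j: "j \<in> I" "c = f j" by blast
    have "d = j" using inj d j DG IG inj_on_eq_iff by (metis subsetD)
    then show "c \<in> f ` (I \<inter> D)" using d j by blast
  qed
  have fC: "finite C" using C(1) fE finite_subset by blast
  have ceq: "card (C - {f e}) = card D - 1" using C(2,3) fC by simp
  have "card (C - {f e}) \<le> card (f ` (I \<inter> D))" using card_mono[OF _ sub] fD by simp
  also have "\<dots> \<le> card (I \<inter> D)" using card_image_le fD by blast
  finally show "e \<in> I \<and> card D - 1 \<le> card (I \<inter> D)" using eI ceq by simp
next
  assume a: "e \<in> I \<and> card D - 1 \<le> card (I \<inter> D)"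
  then obtain S where S: "S \<subseteq> I \<inter> D" "card S = card D - 1" "finite S"
    using obtain_subset_with_card_n by metis
  have "card (f ` S) = card S" using card_image inj DG S(1) inj_on_subset by (metis Int_subset_iff subset_trans)
  moreover have "f e \<notin> f ` S" using pfD S(1) by blast
  ultimately have "card (insert (f e) (f ` S)) = card D" using S cD by simp
  moreover have "insert (f e) (f ` S) \<subseteq> f ` insert e D" using S(1) by blast
  ultimately have "circuit (uniform (Suc (card D) - 2) (f ` insert e D)) (insert (f e) (f ` S))"
    unfolding cU by blast
  moreover have "insert (f e) (f ` S) \<subseteq> f ` I" using S(1) a by blast
  ultimately show "\<exists>C. circuit (uniform (Suc (card D) - 2) (f ` insert e D)) C \<and> f e \<in> C \<and> C \<subseteq> f ` I"
    by blast
qed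

end


context twoc
begin

lemma caseB:
  assumes I: "I \<subseteq> D1 \<union> D2" "indep M I" "\<not> indep M (insert e I)" and c: "card (I \<inter> D2) < card D2 - 1"
  shows "\<exists>C. cocircuit M C \<and> card C = 2 \<and> e \<notin> C"
proof -
  have "card (D2 - I) = card D2 - card (D2 \<inter> I)" using f2 by (intro card_Diff_subset_Int) simp
  moreover have "D2 \<inter> I = I \<inter> D2" by blast
  ultimately have "card (D2 - I) = card D2 - card (I \<inter> D2)" by simp
  then have "2 \<le> card (D2 - I)" using c by linarith
  then obtain S where S: "S \<subseteq> D2 - I" "card S = 2" using obtain_subset_with_card_n by metis
  then obtain x y where xy: "S = {x, y}" "x \<noteq> y" using card_2_iff by metis
  have "x \<in> D2" "y \<in> D2" "x \<notin> I" "y \<notin> I" using S(1) xy(1) by auto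
  then have "cocircuit M {x, y}" using coc[OF I] xy(2) by blast
  moreover have "e \<notin> {x, y}" using \<open>x \<in> D2\<close> \<open>y \<in> D2\<close> enot by blast
  ultimately show ?thesis using S(2) xy(1) by blast
qed

lemma charM:
  assumes cA: "\<forall>I. I \<subseteq> D1 \<union> D2 \<and> indep M I \<and> (card (I \<inter> D1) < card D1 - 1 \<or> card (I \<inter> D2) < card D2 - 1)
                 \<longrightarrow> indep M (insert e I)"
    and IG: "I \<subseteq> ground M"
  shows "indep M I \<longleftrightarrow> \<not> (D1 \<subseteq> I \<or> D2 \<subseteq> I \<or> ((e \<in> I \<and> card D1 - 1 \<le> card (I \<inter> D1)) \<and> (e \<in> I \<and> card D2 - 1 \<le> card (I \<inter> D2))))"
proof
  assume i: "indep M I"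
  have "\<not> D1 \<subseteq> I" using circ_dep[OF c1] i by blast
  moreover have "\<not> D2 \<subseteq> I" using circ_dep[OF c2] i by blast
  moreover have "\<not> (e \<in> I \<and> card D1 - 1 \<le> card (I \<inter> D1) \<and> card D2 - 1 \<le> card (I \<inter> D2))"
  proof
    assume "e \<in> I \<and> card D1 - 1 \<le> card (I \<inter> D1) \<and> card D2 - 1 \<le> card (I \<inter> D2)"
    then show False using no_full[OF i] by blast
  qed
  ultimately show "\<not> (D1 \<subseteq> I \<or> D2 \<subseteq> I \<or> ((e \<in> I \<and> card D1 - 1 \<le> card (I \<inter> D1)) \<and> (e \<in> I \<and> card D2 - 1 \<le> card (I \<inter> D2))))"
    by blast
next
  assume n: "\<not> (D1 \<subseteq> I \<or> D2 \<subseteq> I \<or> ((e \<in> I \<and> card D1 - 1 \<le> card (I \<inter> D1)) \<and> (e \<in> I \<and> card D2 - 1 \<le> card (I \<inter> D2))))"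
  show "indep M I"
  proof (cases "e \<in> I")
    case False
    then have "I \<subseteq> D1 \<union> D2" using IG gr by blast
    moreover have "\<not> D1 \<subseteq> I" "\<not> D2 \<subseteq> I" using n by blast+
    ultimately show ?thesis by (rule L1g)
  next
    case True
    let ?I = "I - {e}"
    have sub: "?I \<subseteq> D1 \<union> D2" using IG gr by blast
    have n1: "\<not> D1 \<subseteq> ?I" "\<not> D2 \<subseteq> ?I" using n by blast+
    have ii: "indep M ?I" using L1g[OF sub n1] .
    have "?I \<inter> D1 = I \<inter> D1" "?I \<inter> D2 = I \<inter> D2" using enot by blast+
    moreover have "\<not> (card D1 - 1 \<le> card (I \<inter> D1) \<and> card D2 - 1 \<le> card (I \<inter> D2))" using n True by blast
    ultimately have "card (?I \<inter> D1) < card D1 - 1 \<or> card (?I \<inter> D2) < card D2 - 1" by (simp only:) linarith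
    then have "?I \<subseteq> D1 \<union> D2 \<and> indep M ?I \<and> (card (?I \<inter> D1) < card D1 - 1 \<or> card (?I \<inter> D2) < card D2 - 1)"
      using sub ii by blast
    then have "indep M (insert e ?I)" by (rule mp[OF spec[OF cA]])
    then show ?thesis using True by (simp add: insert_absorb)
  qed
qed

lemma caseA_iso:
  assumes cA: "\<forall>I. I \<subseteq> D1 \<union> D2 \<and> indep M I \<and> (card (I \<inter> D1) < card D1 - 1 \<or> card (I \<inter> D2) < card D2 - 1)
                 \<longrightarrow> indep M (insert e I)"
  shows "\<exists>k l :: nat. k \<ge> 3 \<and> l \<ge> 3 \<and>
            (\<exists>(E1 :: nat set) E2 p f. finite E1 \<and> finite E2 \<and> card E1 = k \<and> card E2 = l \<and>
               E1 \<inter> E2 = {p} \<and>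
               matroid_iso f M (series (uniform (k - 2) E1) (uniform (l - 2) E2) p) \<and>
               f e = p)"
proof -
  obtain f :: "'a \<Rightarrow> nat" where inj: "inj_on f (ground M)"
    using finite_imp_inj_to_nat_seg[OF fin_ground] by blast
  let ?E1 = "f ` insert e D1" and ?E2 = "f ` insert e D2"
  let ?N = "series (uniform (Suc (card D1) - 2) ?E1) (uniform (Suc (card D2) - 2) ?E2) (f e)"
  have eG: "e \<in> ground M" using gr by blast
  have D1G: "D1 \<subseteq> ground M" and D2G: "D2 \<subseteq> ground M" using gr by auto
  have fin1: "finite ?E1" and fin2: "finite ?E2" using f1 f2 by auto
  have i1: "inj_on f (insert e D1)" using inj_on_subset[OF inj] eG D1G by blast
  have i2: "inj_on f (insert e D2)" using inj_on_subset[OF inj] eG D2G by blast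
  have ce1: "card ?E1 = Suc (card D1)" using card_image[OF i1] f1 enot by simp
  have ce2: "card ?E2 = Suc (card D2)" using card_image[OF i2] f2 enot by simp
  have int: "?E1 \<inter> ?E2 = {f e}"
  proof -
    have X: "?E1 \<inter> ?E2 = f ` (insert e D1 \<inter> insert e D2)"
      using inj_on_image_Int[OF inj] eG D1G D2G by (metis insert_subset)
    have Y: "insert e D1 \<inter> insert e D2 = {e}" using disj by blast
    show ?thesis unfolding X Y by simp
  qed
  have gN: "ground ?N = ?E1 \<union> ?E2" unfolding ground_series ground_uniform ..
  have bij: "bij_betw f (ground M) (ground ?N)"
  proof -
    have "f ` ground M = ?E1 \<union> ?E2" using gr by auto
    then show ?thesis unfolding bij_betw_def gN using inj by blast
  qed
  have iso: "indep M I \<longleftrightarrow> indep ?N (f ` I)" if IG: "I \<subseteq> ground M" for I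
  proof -
    interpret s1: side f "ground M" D1 I e using inj D1G eG enot f1 a2 IG by unfold_locales auto
    interpret s2: side f "ground M" D2 I e using inj D2G eG enot f2 b2 IG by unfold_locales auto
    have "f ` I \<subseteq> ?E1 \<union> ?E2" using IG gr by auto
    then have "indep ?N (f ` I) \<longleftrightarrow>
      \<not> (D1 \<subseteq> I \<or> D2 \<subseteq> I \<or> ((e \<in> I \<and> card D1 - 1 \<le> card (I \<inter> D1)) \<and> (e \<in> I \<and> card D2 - 1 \<le> card (I \<inter> D2))))"
      unfolding indep_series series_ex ground_uniform s1.side1 s2.side1 s1.side2 s2.side2 by simp
    then show ?thesis using charM[OF cA IG] by simp
  qed
  have mi: "matroid_iso f M ?N" unfolding matroid_iso_def using bij iso by blast
  have k3: "Suc (card D1) \<ge> 3" "Suc (card D2) \<ge> 3" using a2 b2 by auto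
  show ?thesis
    apply (rule exI[of _ "Suc (card D1)"])
    apply (rule exI[of _ "Suc (card D2)"])
    apply (rule conjI, rule k3(1))
    apply (rule conjI, rule k3(2))
    apply (rule exI[of _ ?E1])
    apply (rule exI[of _ ?E2])
    apply (rule exI[of _ "f e"])
    apply (rule exI[of _ f])
    using fin1 fin2 ce1 ce2 int mi by simp
qed

lemma main:
  "(\<exists>C. cocircuit M C \<and> card C = 2 \<and> e \<notin> C) \<or>
         (\<exists>k l :: nat. k \<ge> 3 \<and> l \<ge> 3 \<and>
            (\<exists>(E1 :: nat set) E2 p f. finite E1 \<and> finite E2 \<and> card E1 = k \<and> card E2 = l \<and>
               E1 \<inter> E2 = {p} \<and>
               matroid_iso f M (series (uniform (k - 2) E1) (uniform (l - 2) E2) p) \<and>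
               f e = p))"
proof (cases "\<forall>I. I \<subseteq> D1 \<union> D2 \<and> indep M I \<and> (card (I \<inter> D1) < card D1 - 1 \<or> card (I \<inter> D2) < card D2 - 1)
                 \<longrightarrow> indep M (insert e I)")
  case True
  then show ?thesis using caseA_iso by blast
next
  case False
  then obtain I where I: "I \<subseteq> D1 \<union> D2" "indep M I" "\<not> indep M (insert e I)"
    and c: "card (I \<inter> D1) < card D1 - 1 \<or> card (I \<inter> D2) < card D2 - 1" by blast
  interpret sw: twoc M D2 D1 e by (rule swap)
  show ?thesis
  proof (cases "card (I \<inter> D2) < card D2 - 1")
    case True
    then show ?thesis using caseB[OF I] by blast
  next
    case False
    then have "card (I \<inter> D1) < card D1 - 1" using c by blast
    moreover have "I \<subseteq> D2 \<union> D1" using I(1) by blast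
    ultimately show ?thesis using sw.caseB[OF \<open>I \<subseteq> D2 \<union> D1\<close> I(2,3)] by blast
  qed
qed

end


theorem lemma2p2:
  fixes M :: "'a matroid" and D1 D2 :: "'a set" and e :: 'a
  assumes "is_matroid M"
    and "connected_matroid M"
    and "ground M = D1 \<union> D2 \<union> {e}"
    and "e \<notin> D1 \<union> D2"
    and "circuit M D1" and "circuit M D2"
    and "skew M D1 D2"
  shows "(\<exists>C. cocircuit M C \<and> card C = 2 \<and> e \<notin> C) \<or>
         (\<exists>k l :: nat. k \<ge> 3 \<and> l \<ge> 3 \<and>
            (\<exists>(E1 :: nat set) E2 p f. finite E1 \<and> finite E2 \<and> card E1 = k \<and> card E2 = l \<and>
               E1 \<inter> E2 = {p} \<and>
               matroid_iso f M (series (uniform (k - 2) E1) (uniform (l - 2) E2) p) \<and>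
               f e = p))"
proof -
  interpret twoc M D1 D2 e
    using assms unfolding twoc_def twoc_axioms_def mat_def by blast
  show ?thesis by (rule main)
qed

end
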